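(* Let $r>0$ and $0\le\gamma<\lambda\le\mu$. Suppose $q(\theta)=Q(\theta\mid\theta^* )$ is $\lambda$-strongly concave and $\mu$-smooth on $\mathbb{R}^d$, i.e. for all $\theta_1,\theta_2$, $$-\frac{\mu}{2}\|\theta_1-\theta_2\|_2^2\le q(\theta_1)-q(\theta_2)-\langle\nabla q(\theta_2),\theta_1-\theta_2\rangle\le-\frac{\lambda}{2}\|\theta_1-\theta_2\|_2^2,$$ and that the gradient stability condition GS$(\gamma)$ holds over $\mathbb{B}_2(r;\theta^* )$: $$\|\nabla Q(\theta\mid\theta^* )-\nabla Q(\theta\mid\theta)\|_2\le\gamma\|\theta-\theta^*\|_2\quad\text{for all }\theta\in\mathbb{B}_2(r;\theta^* ).$$ Then the population gradient EM operator $G(\theta)=\theta+\alpha\nabla Q(\theta\mid\theta)$ with step size $\alpha=\frac{2}{\mu+\lambda}$ satisfies, for all $\theta\in\mathbb{B}_2(r;\theta^* )$, $$\|G(\theta)-\theta^*\|_2\le\Big(1-\frac{2\lambda-2\gamma}{\mu+\lambda}\Big)\|\theta-\theta^*\|_2.$$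
   Context: Setting (unconstrained): $(Y,Z)$ has joint density $f_{\theta^*}$ from a family $\{f_\theta:\theta\in\mathbb{R}^d\}$; $g_\theta(y)=\int f_\theta(y,z)dz$; $k_\theta(z\mid y)$ is the conditional density of $Z$ given $Y=y$. The population $Q$-function is $Q(\theta'\mid\theta)=\int(\int k_\theta(z\mid y)\log f_{\theta'}(y,z)dz)g_{\theta^*}(y)dy$, differentiable in its first argument; $\nabla$ denotes the gradient in the first argument. $q(\theta)=Q(\theta\mid\theta^* )$, and $\theta^*$ is a maximizer of $q$ over $\mathbb{R}^d$ (so $\nabla q(\theta^* )=0$). $\mathbb{B}_2(r;\theta^* )=\{\theta:\|\theta-\theta^*\|_2\le r\}$. *)

theory Defs
  imports "HOL-Analysis.Analysis"
begin

end

theory Submission imports Defs begin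
lemma half_coco:
  fixes phi :: "'a::real_inner \<Rightarrow> real"
  assumes lo: "\<And>a b. 0 \<le> phi a - phi b - dphi b \<bullet> (a - b)"
    and up: "\<And>a b. phi a - phi b - dphi b \<bullet> (a - b) \<le> L/2 * (norm (a - b))\<^sup>2"
  shows "phi y - phi x - dphi x \<bullet> (y - x) \<ge> t * (norm (dphi y - dphi x))\<^sup>2 - L/2 * t^2 * (norm (dphi y - dphi x))\<^sup>2"
proof -
  define w where "w = dphi y - dphi x"
  define z where "z = y - t *\<^sub>R w"
  have 1: "0 \<le> phi z - phi x - dphi x \<bullet> (z - x)" by (rule lo)
  have 2: "phi z - phi y - dphi y \<bullet> (z - y) \<le> L/2 * (norm (z - y))\<^sup>2" by (rule up)
  have n: "(norm (z - y))\<^sup>2 = t^2 * (norm w)\<^sup>2" unfolding z_def by (simp add: power_mult_distrib)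
  have e: "dphi x \<bullet> (z - x) = dphi x \<bullet> (y - x) - t * (dphi x \<bullet> w)"
     "dphi y \<bullet> (z - y) = - t * (dphi y \<bullet> w)" unfolding z_def by (simp_all add: inner_diff_right algebra_simps)
  have w2: "(norm w)\<^sup>2 = dphi y \<bullet> w - dphi x \<bullet> w" unfolding w_def
    by (simp add: power2_norm_eq_inner inner_diff_left inner_diff_right)
  have 1: "0 \<le> phi z - phi x - (dphi x \<bullet> (y - x) - t * (dphi x \<bullet> w))" using 1 e by simp
  have 2: "phi z - phi y + t * (dphi y \<bullet> w) \<le> L/2 * t^2 * (norm w)\<^sup>2" using 2 n e by simp
  have 3: "t * (norm w)\<^sup>2 = t * (dphi y \<bullet> w) - t * (dphi x \<bullet> w)" by (simp add: w2 right_diff_distrib)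
  show ?thesis unfolding w_def[symmetric] using 1 2 3 by linarith
qed

lemma coco:
  fixes phi :: "'a::real_inner \<Rightarrow> real"
  assumes lo: "\<And>a b. 0 \<le> phi a - phi b - dphi b \<bullet> (a - b)"
    and up: "\<And>a b. phi a - phi b - dphi b \<bullet> (a - b) \<le> L/2 * (norm (a - b))\<^sup>2"
    and L: "L \<ge> 0"
  shows "(norm (dphi x - dphi y))\<^sup>2 \<le> L * ((dphi x - dphi y) \<bullet> (x - y))"
proof -
  define w where "w = dphi x - dphi y"
  have nw: "norm (dphi y - dphi x) = norm w" unfolding w_def by (simp add: norm_minus_commute)
  have key: "w \<bullet> (x - y) \<ge> (2*t - L * t^2) * (norm w)\<^sup>2" for t
  proof -
    have a: "phi y - phi x - dphi x \<bullet> (y - x) \<ge> t * (norm w)\<^sup>2 - L/2 * t^2 * (norm w)\<^sup>2"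
      using half_coco[OF lo up, where y=y and x=x and t=t] nw by simp
    have b: "phi x - phi y - dphi y \<bullet> (x - y) \<ge> t * (norm w)\<^sup>2 - L/2 * t^2 * (norm w)\<^sup>2"
      using half_coco[OF lo up, where y=x and x=y and t=t] unfolding w_def by simp
    have "w \<bullet> (x - y) = (phi y - phi x - dphi x \<bullet> (y - x)) + (phi x - phi y - dphi y \<bullet> (x - y))"
      unfolding w_def by (simp add: inner_diff_left inner_diff_right algebra_simps)
    then show ?thesis using a b by (simp add: algebra_simps)
  qed
  show ?thesis
  proof (cases "L = 0")
    case True
    show ?thesis
    proof (rule ccontr)
      assume "\<not> ?thesis"
      hence pos: "(norm w)\<^sup>2 > 0" using True w_def by simp
      have "2 * ((\<bar>w \<bullet> (x - y)\<bar> + 1) / (norm w)\<^sup>2) * (norm w)\<^sup>2 \<le> w \<bullet> (x - y)"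
        using key[of "(\<bar>w \<bullet> (x - y)\<bar> + 1) / (norm w)\<^sup>2"] True by simp
      moreover have "2 * ((\<bar>w \<bullet> (x - y)\<bar> + 1) / (norm w)\<^sup>2) * (norm w)\<^sup>2 = 2 * (\<bar>w \<bullet> (x - y)\<bar> + 1)" using pos by simp
      ultimately have "2 * (\<bar>w \<bullet> (x - y)\<bar> + 1) \<le> w \<bullet> (x - y)" by simp
      then show False by (smt (verit) abs_ge_self)
    qed
  next
    case False
    hence Lp: "L > 0" using L by simp
    have "w \<bullet> (x - y) \<ge> (2*(1/L) - L * (1/L)^2) * (norm w)\<^sup>2" by (rule key)
    also have "(2*(1/L) - L * (1/L)^2) = 1/L" using Lp by (simp add: power2_eq_square field_simps)
    finally have "w \<bullet> (x - y) \<ge> (norm w)\<^sup>2 / L" by simp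
    then show ?thesis using Lp unfolding w_def by (simp add: field_simps)
  qed
qed
theorem theorem3:
  fixes Q :: "real ^ 'd \<Rightarrow> real ^ 'd \<Rightarrow> real"
    and gradQ :: "real ^ 'd \<Rightarrow> real ^ 'd \<Rightarrow> real ^ 'd"
    and theta_star :: "real ^ 'd"
    and r \<gamma> lam \<mu> :: real
  assumes grad: "\<And>\<theta>' \<theta>. GDERIV (\<lambda>t. Q t \<theta>) \<theta>' :> gradQ \<theta>' \<theta>"
    and max: "\<And>\<theta>. Q \<theta> theta_star \<le> Q theta_star theta_star"
    and r_pos: "r > 0"
    and params: "0 \<le> \<gamma>" "\<gamma> < lam" "lam \<le> \<mu>"
    and smooth: "\<And>\<theta>1 \<theta>2. - (\<mu> / 2) * (norm (\<theta>1 - \<theta>2))\<^sup>2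
        \<le> Q \<theta>1 theta_star - Q \<theta>2 theta_star - gradQ \<theta>2 theta_star \<bullet> (\<theta>1 - \<theta>2)"
    and concave: "\<And>\<theta>1 \<theta>2. Q \<theta>1 theta_star - Q \<theta>2 theta_star - gradQ \<theta>2 theta_star \<bullet> (\<theta>1 - \<theta>2)
        \<le> - (lam / 2) * (norm (\<theta>1 - \<theta>2))\<^sup>2"
    and GS: "\<And>\<theta>. \<theta> \<in> cball theta_star r \<Longrightarrow>
        norm (gradQ \<theta> theta_star - gradQ \<theta> \<theta>) \<le> \<gamma> * norm (\<theta> - theta_star)"
  shows "\<forall>\<theta> \<in> cball theta_star r.
     norm ((\<theta> + (2 / (\<mu> + lam)) *\<^sub>R gradQ \<theta> \<theta>) - theta_star)
       \<le> (1 - (2 * lam - 2 * \<gamma>) / (\<mu> + lam)) * norm (\<theta> - theta_star)"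
proof
  fix \<theta> assume th: "\<theta> \<in> cball theta_star r"
  define g where "g a = gradQ a theta_star" for a
  have lamp: "lam > 0" "\<mu> > 0" "\<mu> + lam \<noteq> 0" using params by auto
  have g0: "g theta_star = 0"
  proof -
    define v where "v = g theta_star"
    define t where "t = 1 / \<mu>"
    have "- (\<mu> / 2) * (norm (t *\<^sub>R v))\<^sup>2
        \<le> Q (theta_star + t *\<^sub>R v) theta_star - Q theta_star theta_star - v \<bullet> (t *\<^sub>R v)"
      using smooth[of "theta_star + t *\<^sub>R v" theta_star] unfolding v_def g_def by simp
    moreover have "Q (theta_star + t *\<^sub>R v) theta_star \<le> Q theta_star theta_star" by (rule max)
    moreover have "v \<bullet> (t *\<^sub>R v) = t * (norm v)\<^sup>2" by (simp add: power2_norm_eq_inner)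
    moreover have "v \<bullet> v = (norm v)\<^sup>2" by (simp add: power2_norm_eq_inner)
    moreover have "(norm (t *\<^sub>R v))\<^sup>2 = t^2 * (norm v)\<^sup>2" by (simp add: power_mult_distrib)
    ultimately have "t * (norm v)\<^sup>2 \<le> (\<mu> / 2) * t^2 * (norm v)\<^sup>2" by (simp del: real_norm_def)
    then have "(norm v)\<^sup>2 / \<mu> \<le> (norm v)\<^sup>2 / (2 * \<mu>)" using lamp
      unfolding t_def by (simp add: power2_eq_square field_simps)
    then have "(norm v)\<^sup>2 \<le> 0" using lamp by (simp add: field_simps)
    then show ?thesis unfolding v_def by simp
  qed
  define phi where "phi a = - Q a theta_star - lam/2 * (norm a)\<^sup>2" for a
  define dphi where "dphi a = - g a - lam *\<^sub>R a" for a
  have breg: "phi a - phi b - dphi b \<bullet> (a - b)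
      = - (Q a theta_star - Q b theta_star - g b \<bullet> (a - b)) - lam/2 * (norm (a - b))\<^sup>2" for a b
  proof -
    have "(norm (a - b))\<^sup>2 = (norm a)\<^sup>2 - (norm b)\<^sup>2 - 2 * (b \<bullet> (a - b))"
      by (simp add: power2_norm_eq_inner inner_diff_left inner_diff_right inner_commute)
    then show ?thesis unfolding phi_def dphi_def
      by (simp add: inner_diff_left inner_diff_right inner_add_left power2_norm_eq_inner inner_commute algebra_simps)
  qed
  have lo: "0 \<le> phi a - phi b - dphi b \<bullet> (a - b)" for a b
    using concave[of a b] unfolding breg g_def by simp
  have up: "phi a - phi b - dphi b \<bullet> (a - b) \<le> (\<mu> - lam)/2 * (norm (a - b))\<^sup>2" for a b
    using smooth[of a b] unfolding breg g_def by (simp add: algebra_simps)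
  have cc: "(norm (dphi \<theta> - dphi theta_star))\<^sup>2 \<le> (\<mu> - lam) * ((dphi \<theta> - dphi theta_star) \<bullet> (\<theta> - theta_star))"
    by (rule coco[OF lo up]) (use params in simp)
  define d where "d = \<theta> - theta_star"
  define G where "G = g \<theta>"
  have u: "dphi \<theta> - dphi theta_star = - (G + lam *\<^sub>R d)"
    unfolding dphi_def G_def d_def g0 by (simp add: algebra_simps)
  have e1: "(norm (G + lam *\<^sub>R d))\<^sup>2 = (norm G)\<^sup>2 + 2 * lam * (G \<bullet> d) + lam^2 * (norm d)\<^sup>2"
    unfolding power2_norm_eq_inner by (simp add: inner_add_left inner_add_right inner_commute power2_eq_square algebra_simps)
  have e2: "(G + lam *\<^sub>R d) \<bullet> d = G \<bullet> d + lam * (norm d)\<^sup>2"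
    by (simp add: power2_norm_eq_inner inner_add_left)
  have cc2: "(norm G)\<^sup>2 + lam * \<mu> * (norm d)\<^sup>2 \<le> - (\<mu> + lam) * (G \<bullet> d)"
    using cc unfolding u d_def[symmetric] norm_minus_cancel e1 inner_minus_left e2
    by (simp add: power2_eq_square algebra_simps)
  define \<alpha> where "\<alpha> = 2 / (\<mu> + lam)"
  define \<kappa> where "\<kappa> = (\<mu> - lam) / (\<mu> + lam)"
  have sq: "(norm (d + \<alpha> *\<^sub>R G))\<^sup>2 = (norm d)\<^sup>2 + 2 * \<alpha> * (G \<bullet> d) + \<alpha>\<^sup>2 * (norm G)\<^sup>2"
    unfolding power2_norm_eq_inner by (simp add: inner_add_left inner_add_right inner_commute power2_eq_square algebra_simps)
  have s1: "2 * \<alpha> * (G \<bullet> d) \<le> - \<alpha>\<^sup>2 * ((norm G)\<^sup>2 + lam * \<mu> * (norm d)\<^sup>2)"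
  proof -
    have "2 * \<alpha> * (G \<bullet> d) = - \<alpha>\<^sup>2 * (- (\<mu> + lam) * (G \<bullet> d))"
    proof -
      have a1: "\<alpha> * (\<mu> + lam) = 2" unfolding \<alpha>_def using lamp(3) by (simp add: field_simps)
      have "\<alpha>\<^sup>2 * (\<mu> + lam) = \<alpha> * (\<alpha> * (\<mu> + lam))" by (simp add: power2_eq_square)
      then have "\<alpha>\<^sup>2 * (\<mu> + lam) = 2 * \<alpha>" using a1 by simp
      have "- \<alpha>\<^sup>2 * (- (\<mu> + lam) * (G \<bullet> d)) = (\<alpha>\<^sup>2 * (\<mu> + lam)) * (G \<bullet> d)"
        by (simp only: mult_minus_left mult_minus_right minus_minus mult.assoc)
      also have "\<dots> = 2 * \<alpha> * (G \<bullet> d)" using \<open>\<alpha>\<^sup>2 * (\<mu> + lam) = 2 * \<alpha>\<close> by simp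
      finally show ?thesis by simp
    qed
    also have "\<dots> \<le> - \<alpha>\<^sup>2 * ((norm G)\<^sup>2 + lam * \<mu> * (norm d)\<^sup>2)"
    proof -
      have "\<alpha>\<^sup>2 * ((norm G)\<^sup>2 + lam * \<mu> * (norm d)\<^sup>2) \<le> \<alpha>\<^sup>2 * (- (\<mu> + lam) * (G \<bullet> d))"
        using cc2 by (rule mult_left_mono) simp
      then show ?thesis by linarith
    qed
    finally show ?thesis .
  qed
  have k2: "1 - \<alpha>\<^sup>2 * lam * \<mu> = \<kappa>\<^sup>2"
  proof -
    have "1 - \<alpha>\<^sup>2 * lam * \<mu> = ((\<mu> + lam)\<^sup>2 - 4 * lam * \<mu>) / (\<mu> + lam)\<^sup>2"
      unfolding \<alpha>_def power_divide using lamp(3) by (simp add: field_simps)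
    also have "(\<mu> + lam)\<^sup>2 - 4 * lam * \<mu> = (\<mu> - lam)\<^sup>2" by (simp add: power2_eq_square algebra_simps)
    finally show ?thesis unfolding \<kappa>_def power_divide .
  qed
  have apos: "\<alpha> > 0" unfolding \<alpha>_def using params by simp
  have "(norm (d + \<alpha> *\<^sub>R G))\<^sup>2 \<le> (\<kappa> * norm d)\<^sup>2"
  proof -
    have dist: "- \<alpha>\<^sup>2 * ((norm G)\<^sup>2 + lam * \<mu> * (norm d)\<^sup>2)
        = - (\<alpha>\<^sup>2 * (norm G)\<^sup>2) - (\<alpha>\<^sup>2 * lam * \<mu>) * (norm d)\<^sup>2"
      by (simp add: algebra_simps)
    have m: "(1 - \<alpha>\<^sup>2 * lam * \<mu>) * (norm d)\<^sup>2 = (norm d)\<^sup>2 - (\<alpha>\<^sup>2 * lam * \<mu>) * (norm d)\<^sup>2"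
      by (simp add: algebra_simps)
    have "(norm (d + \<alpha> *\<^sub>R G))\<^sup>2 \<le> (1 - \<alpha>\<^sup>2 * lam * \<mu>) * (norm d)\<^sup>2"
      unfolding m using sq s1 dist by linarith
    then show ?thesis unfolding k2 power_mult_distrib .
  qed
  moreover have kp: "\<kappa> \<ge> 0" unfolding \<kappa>_def using params by simp
  ultimately have main: "norm (d + \<alpha> *\<^sub>R G) \<le> \<kappa> * norm d"
    using power2_le_imp_le by (metis norm_ge_zero mult_nonneg_nonneg)
  have gs: "norm (G - gradQ \<theta> \<theta>) \<le> \<gamma> * norm d" using GS[OF th] unfolding G_def g_def d_def .
  have "\<theta> + \<alpha> *\<^sub>R gradQ \<theta> \<theta> - theta_star = (d + \<alpha> *\<^sub>R G) - \<alpha> *\<^sub>R (G - gradQ \<theta> \<theta>)"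
    unfolding d_def by (simp add: algebra_simps)
  moreover have "norm (\<alpha> *\<^sub>R (G - gradQ \<theta> \<theta>)) = \<alpha> * norm (G - gradQ \<theta> \<theta>)"
    using apos by simp
  ultimately have "norm (\<theta> + \<alpha> *\<^sub>R gradQ \<theta> \<theta> - theta_star) \<le> norm (d + \<alpha> *\<^sub>R G) + \<alpha> * norm (G - gradQ \<theta> \<theta>)"
    using norm_triangle_ineq4[of "d + \<alpha> *\<^sub>R G" "\<alpha> *\<^sub>R (G - gradQ \<theta> \<theta>)"] apos by simp
  also have "\<dots> \<le> \<kappa> * norm d + \<alpha> * (\<gamma> * norm d)"
    using main mult_left_mono[OF gs, of \<alpha>] apos by linarith
  also have "\<dots> = (\<kappa> + \<alpha> * \<gamma>) * norm d" by (simp add: algebra_simps)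
  also have "\<kappa> + \<alpha> * \<gamma> = 1 - (2 * lam - 2 * \<gamma>) / (\<mu> + lam)"
  proof -
    have "\<kappa> + \<alpha> * \<gamma> = (\<mu> - lam + 2 * \<gamma>) / (\<mu> + lam)"
      unfolding \<kappa>_def \<alpha>_def by (simp add: add_divide_distrib)
    also have "\<dots> = ((\<mu> + lam) - (2 * lam - 2 * \<gamma>)) / (\<mu> + lam)" by (simp add: algebra_simps)
    also have "\<dots> = 1 - (2 * lam - 2 * \<gamma>) / (\<mu> + lam)" using lamp(3) by (metis diff_divide_distrib divide_self_if)
    finally show ?thesis .
  qed
  finally show "norm ((\<theta> + (2 / (\<mu> + lam)) *\<^sub>R gradQ \<theta> \<theta>) - theta_star)
       \<le> (1 - (2 * lam - 2 * \<gamma>) / (\<mu> + lam)) * norm (\<theta> - theta_star)"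
    unfolding \<alpha>_def d_def .
qed

end
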